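(* Let $\epsilon>0$ be fixed. Define the randomized mechanism $\mathcal{M}$ (BiSample-MD) whose input is a pair $(v,\epsilon_u)$ with $v\in[-1,1]$ and $\epsilon_u\in\mathbb{R}$, as follows. First set $v'=v$ if $\epsilon\le\epsilon_u$ and $v'=\bot$ (a null value) otherwise. Sample $s\in\{0,1\}$ uniformly at random. If $s=0$, generate a Bernoulli variable $b\in\{0,1\}$ with $$\Pr[b=1]=\begin{cases}\frac{1-e^{\epsilon}}{1+e^{\epsilon}}\cdot\frac{v'}{2}+\frac12 & \text{if } v'\in[-1,1],\\[2pt] \frac{1}{e^{\epsilon}+1} & \text{if } v'=\bot;\end{cases}$$ if $s=1$, generate a Bernoulli variable $b\in\{0,1\}$ with $$\Pr[b=1]=\begin{cases}\frac{e^{\epsilon}-1}{e^{\epsilon}+1}\cdot\frac{v'}{2}+\frac12 & \text{if } v'\in[-1,1],\\[2pt] \frac{1}{e^{\epsilon}+1} & \text{if } v'=\bot.\end{cases}$$ Output $\langle s,b\rangle$. Then $\mathcal{M}$ satisfies $\epsilon$-local differential privacy: for any two inputs $t_1,t_2$ and any output $o\in\{0,1\}\times\{0,1\}$, $\Pr[\mathcal{M}(t_1)=o]\le e^{\epsilon}\Pr[\mathcal{M}(t_2)=o]$.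
   Context: A randomized mechanism $\mathcal{M}$ satisfies $\epsilon$-local differential privacy ($\epsilon$-LDP) if for every two inputs $t_1,t_2$ in its domain and every output $t^*$ in its range, $\Pr[\mathcal{M}(t_1)=t^*]\le \exp(\epsilon)\Pr[\mathcal{M}(t_2)=t^*]$. Here $\epsilon_u$ models the user's privacy preference: the user reveals the real value only if the offered budget $\epsilon$ is at most $\epsilon_u$. *)

theory Defs
  imports "HOL-Probability.Probability"
begin

text \<open>Value after applying the user's privacy preference: Some v = real value, None = null.\<close>
definition masked_value :: "real \<Rightarrow> real \<Rightarrow> real \<Rightarrow> real option" where
  "masked_value eps v eps_u = (if eps \<le> eps_u then Some v else None)"

text \<open>Probability that b = 1 given the sampled bit s (False = 0, True = 1).\<close>
definition bisample_prob :: "real \<Rightarrow> bool \<Rightarrow> real option \<Rightarrow> real" where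
  "bisample_prob eps s v' = (case v' of
      None \<Rightarrow> 1 / (exp eps + 1)
    | Some x \<Rightarrow> (if s then (exp eps - 1) / (exp eps + 1) * (x / 2) + 1/2
                else (1 - exp eps) / (1 + exp eps) * (x / 2) + 1/2))"

definition bisample_md :: "real \<Rightarrow> real \<times> real \<Rightarrow> (bool \<times> bool) pmf" where
  "bisample_md eps t = (case t of (v, eps_u) \<Rightarrow>
     do { s \<leftarrow> pmf_of_set (UNIV :: bool set);
          b \<leftarrow> bernoulli_pmf (bisample_prob eps s (masked_value eps v eps_u));
          return_pmf (s, b) })"

end

theory Submission
  imports Defs
begin

lemma aux:
  fixes e x :: real assumes "e > 1" "-1 \<le> x" "x \<le> 1"
  shows "1/(e+1) \<le> (e-1)/(e+1)*(x/2)+1/2 \<and> (e-1)/(e+1)*(x/2)+1/2 \<le> e/(e+1)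
       \<and> 1/(e+1) \<le> (1-e)/(1+e)*(x/2)+1/2 \<and> (1-e)/(1+e)*(x/2)+1/2 \<le> e/(e+1)"
proof -
  have p: "e + 1 > 0" "1 + e > 0" using assms by auto
  have m1: "0 \<le> (e-1)*(x+1)" "0 \<le> (e-1)*(1-x)" "0 \<le> (e*e-1)*(x+1)" "0 \<le> (e*e-1)*(1-x)" using assms by (auto intro!: mult_nonneg_nonneg simp: less_1_mult less_imp_le)
  show ?thesis using p m1 by (simp add: field_simps)
qed
lemma prob_bounds:
  assumes "eps > 0" and "v' = None \<or> (\<exists>x. v' = Some x \<and> x \<in> {-1..1})"
  shows "1 / (exp eps + 1) \<le> bisample_prob eps s v' \<and> bisample_prob eps s v' \<le> exp eps / (exp eps + 1)"
proof -
  have E: "exp eps > 1" using assms(1) by simp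
  show ?thesis
  proof (cases v')
    case None
    have "exp eps + 1 > 0" using E by linarith
    moreover have "1 / (exp eps + 1) \<le> exp eps / (exp eps + 1)"
      using E \<open>exp eps + 1 > 0\<close> by (intro divide_right_mono) auto
    ultimately show ?thesis using None by (simp add: bisample_prob_def)
  next
    case (Some x)
    with assms have x: "-1 \<le> x" "x \<le> 1" by auto
    show ?thesis using Some aux[OF E x] by (cases s) (auto simp: bisample_prob_def)
  qed
qed

lemma pmf_md:
  assumes "\<And>s. 0 \<le> bisample_prob eps s (masked_value eps (fst t) (snd t)) \<and> bisample_prob eps s (masked_value eps (fst t) (snd t)) \<le> 1"
  shows "pmf (bisample_md eps t) (s, b) =
     1/2 * (if b then bisample_prob eps s (masked_value eps (fst t) (snd t))
            else 1 - bisample_prob eps s (masked_value eps (fst t) (snd t)))"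
  using assms[of True] assms[of False]
  by (cases t; cases s; cases b) (auto simp: bisample_md_def pmf_bind integral_pmf_of_set UNIV_bool pmf_return)

theorem theorem4:
  fixes eps :: real and t1 t2 :: "real \<times> real" and out :: "bool \<times> bool"
  assumes "eps > 0"
    and "fst t1 \<in> {-1..1}" and "fst t2 \<in> {-1..1}"
  shows "pmf (bisample_md eps t1) out \<le> exp eps * pmf (bisample_md eps t2) out"
proof -
  obtain s b where out: "out = (s, b)" by (cases out)
  define p1 where "p1 = bisample_prob eps s (masked_value eps (fst t1) (snd t1))"
  define p2 where "p2 = bisample_prob eps s (masked_value eps (fst t2) (snd t2))"
  have E: "exp eps > 1" using assms(1) by simp
  have b1: "1 / (exp eps + 1) \<le> p1 \<and> p1 \<le> exp eps / (exp eps + 1)"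
    unfolding p1_def using assms by (intro prob_bounds) (auto simp: masked_value_def)
  have b2: "1 / (exp eps + 1) \<le> p2 \<and> p2 \<le> exp eps / (exp eps + 1)"
    unfolding p2_def using assms by (intro prob_bounds) (auto simp: masked_value_def)
  have k: "p1 \<le> exp eps * p2" "1 - p1 \<le> exp eps * (1 - p2)"
  proof -
    have "p1 \<le> exp eps / (exp eps + 1)" using b1 by simp
    also have "\<dots> = exp eps * (1 / (exp eps + 1))" by simp
    also have "\<dots> \<le> exp eps * p2" using b2 E by (intro mult_left_mono) auto
    finally show "p1 \<le> exp eps * p2" .
    have d: "exp eps + 1 > 0" using E by linarith
    have "1 - p1 \<le> 1 - 1 / (exp eps + 1)" using b1 by linarith
    also have "\<dots> = exp eps / (exp eps + 1)" using d by (simp add: field_simps)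
    finally have "1 - p1 \<le> exp eps / (exp eps + 1)" .
    also have "\<dots> = exp eps * (1 - exp eps / (exp eps + 1))" using d by (simp add: field_simps)
    also have "\<dots> \<le> exp eps * (1 - p2)" using b2 E by (intro mult_left_mono) auto
    finally show "1 - p1 \<le> exp eps * (1 - p2)" .
  qed
  have r: "\<And>t s. fst t \<in> {-1..1} \<Longrightarrow> 0 \<le> bisample_prob eps s (masked_value eps (fst t) (snd t)) \<and> bisample_prob eps s (masked_value eps (fst t) (snd t)) \<le> 1"
  proof -
    fix t :: "real \<times> real" and s assume "fst t \<in> {-1..1}"
    then have "1 / (exp eps + 1) \<le> bisample_prob eps s (masked_value eps (fst t) (snd t)) \<and> bisample_prob eps s (masked_value eps (fst t) (snd t)) \<le> exp eps / (exp eps + 1)"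
      using assms by (intro prob_bounds) (auto simp: masked_value_def)
    moreover have dd: "exp eps + 1 > 0" using E by linarith
    moreover have "0 \<le> 1 / (exp eps + 1)" "exp eps / (exp eps + 1) \<le> 1" using dd by (auto simp: divide_le_eq_1)
    ultimately show "0 \<le> bisample_prob eps s (masked_value eps (fst t) (snd t)) \<and> bisample_prob eps s (masked_value eps (fst t) (snd t)) \<le> 1"
      by linarith
  qed
  show ?thesis unfolding out pmf_md[OF r[OF assms(2)]] pmf_md[OF r[OF assms(3)]] p1_def[symmetric] p2_def[symmetric]
    using k by (cases b) auto
qed

end
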